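(* Let $X$ be a geodesic metric space, $e\in X$ and $N$ a Morse gauge. Then $X^{(N)}_e$, with the metric restricted from $X$, is $8N(3,0)$-hyperbolic, i.e. $(x\cdot y)_w\ge\min\{(x\cdot z)_w,(z\cdot y)_w\}-8N(3,0)$ for all $w,x,y,z\in X^{(N)}_e$.
   Context: A Morse gauge is a function $N$ assigning to each $(K,C)$ ($K\ge1,C\ge0$) a number $N(K,C)\ge0$. A geodesic $\gamma$ is $N$-Morse if every $(K,C)$-quasi-geodesic with endpoints on $\gamma$ lies in the $N(K,C)$-neighbourhood of $\gamma$. $X^{(N)}_e$ is the set of $y\in X$ such that some geodesic from $e$ to $y$ is $N$-Morse. The Gromov product is $(x\cdot y)_w=\frac12(d(w,x)+d(w,y)-d(x,y))$. *)

theory Defs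
  imports "HOL-Analysis.Analysis"
begin

definition geodesic_from :: "(real \<Rightarrow> 'a::metric_space) \<Rightarrow> 'a \<Rightarrow> 'a \<Rightarrow> bool" where
  "geodesic_from g x y \<longleftrightarrow> g 0 = x \<and> g (dist x y) = y \<and>
     (\<forall>s\<in>{0..dist x y}. \<forall>t\<in>{0..dist x y}. dist (g s) (g t) = \<bar>s - t\<bar>)"

definition geodesic_space :: "'a::metric_space itself \<Rightarrow> bool" where
  "geodesic_space _ \<longleftrightarrow> (\<forall>x y::'a. \<exists>g. geodesic_from g x y)"

definition quasi_geodesic :: "real \<Rightarrow> real \<Rightarrow> (real \<Rightarrow> 'a::metric_space) \<Rightarrow> real \<Rightarrow> real \<Rightarrow> bool" where
  "quasi_geodesic K C q a b \<longleftrightarrow> a \<le> b \<and>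
     (\<forall>s\<in>{a..b}. \<forall>t\<in>{a..b}.
        \<bar>s - t\<bar> / K - C \<le> dist (q s) (q t) \<and> dist (q s) (q t) \<le> K * \<bar>s - t\<bar> + C)"

definition morse_gauge :: "(real \<Rightarrow> real \<Rightarrow> real) \<Rightarrow> bool" where
  "morse_gauge N \<longleftrightarrow> (\<forall>K C. K \<ge> 1 \<longrightarrow> C \<ge> 0 \<longrightarrow> N K C \<ge> 0)"

definition N_Morse_geodesic :: "(real \<Rightarrow> real \<Rightarrow> real) \<Rightarrow> (real \<Rightarrow> 'a::metric_space) \<Rightarrow> 'a \<Rightarrow> 'a \<Rightarrow> bool" where
  "N_Morse_geodesic N g x y \<longleftrightarrow> geodesic_from g x y \<and>
     (\<forall>K C (q::real \<Rightarrow> 'a) a b. K \<ge> 1 \<longrightarrow> C \<ge> 0 \<longrightarrow> quasi_geodesic K C q a b \<longrightarrow>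
        q a \<in> g ` {0..dist x y} \<longrightarrow> q b \<in> g ` {0..dist x y} \<longrightarrow>
        (\<forall>t\<in>{a..b}. \<exists>s\<in>{0..dist x y}. dist (q t) (g s) \<le> N K C))"

definition morse_stratum :: "(real \<Rightarrow> real \<Rightarrow> real) \<Rightarrow> 'a::metric_space \<Rightarrow> 'a set" where
  "morse_stratum N e = {y. \<exists>g. N_Morse_geodesic N g e y}"

definition gromov_product :: "'a::metric_space \<Rightarrow> 'a \<Rightarrow> 'a \<Rightarrow> real" where
  "gromov_product w x y = (dist w x + dist w y - dist x y) / 2"

end

theory Submission
  imports Defs
begin

lemma basechange:
  fixes A B C D E F d :: real
  assumes "d \<ge> 0"
  "A \<ge> min B C - d" "B \<ge> min A C - d" "C \<ge> min A B - d"
  "A \<ge> min D E - d" "D \<ge> min A E - d" "E \<ge> min A D - d"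
  "B \<ge> min D F - d" "D \<ge> min B F - d" "F \<ge> min B D - d"
  "C \<ge> min E F - d" "E \<ge> min C F - d" "F \<ge> min C E - d"
  shows "A - D - E \<ge> min (B - D - F) (C - F - E) - 2*d"
  using assms by (simp add: min_def split: if_splits; linarith)

lemma geo_cont:
  assumes "geodesic_from g x y"
  shows "continuous_on {0..dist x y} g"
  unfolding continuous_on_iff
proof (intro ballI allI impI)
  fix s ee assume s: "s \<in> {0..dist x y}" and ee: "(0::real) < ee"
  show "\<exists>d>0. \<forall>x'\<in>{0..dist x y}. dist x' s < d \<longrightarrow> dist (g x') (g s) < ee"
    using assms s ee unfolding geodesic_from_def dist_real_def by (intro exI[of _ ee]) auto
qed

lemma geo_dist:
  assumes "geodesic_from g x y" "s \<in> {0..dist x y}" "t \<in> {0..dist x y}"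
  shows "dist (g s) (g t) = \<bar>s - t\<bar>"
  using assms unfolding geodesic_from_def by blast

lemma qg3:
  fixes g h :: "real \<Rightarrow> 'a::metric_space"
  assumes g: "geodesic_from g e p"
    and h: "\<forall>s\<in>{0..l}. \<forall>t\<in>{0..l}. dist (h s) (h t) = \<bar>s-t\<bar>"
    and h0: "h 0 = p" and cl: "\<forall>t\<in>{0..l}. dist e p \<le> dist e (h t)" and l: "l \<ge> 0"
  shows "quasi_geodesic 3 0 (\<lambda>s. if s \<le> dist e p then g s else h (s - dist e p)) 0 (dist e p + l)"
proof -
  define D where "D = dist e p"
  have D0: "D \<ge> 0" unfolding D_def by simp
  have gD: "g D = p" "g 0 = e" using g unfolding geodesic_from_def D_def by auto
  have mixed: "(t - s)/3 \<le> dist (g s) (h (t - D)) \<and> dist (g s) (h (t - D)) \<le> t - s"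
    if "0 \<le> s" "s \<le> D" "D < t" "t \<le> D + l" for s t
  proof -
    have up: "dist (g s) p = D - s"
      using geo_dist[OF g, of s D] that gD unfolding D_def by auto
    have vp: "dist p (h (t - D)) = t - D"
      using h h0 that by (metis abs_of_nonneg atLeastAtMost_iff diff_ge_0_iff_ge diff_le_eq
          add.commute order_refl less_imp_le zero_le_numeral l diff_zero abs_minus_commute)
    have es: "dist e (g s) = s"
      using geo_dist[OF g, of 0 s] that gD unfolding D_def by auto
    have c: "D \<le> dist e (h (t - D))" using cl that unfolding D_def by auto
    have t1: "dist e (h (t - D)) \<le> dist e (g s) + dist (g s) (h (t - D))" by (rule dist_triangle)
    have t2: "dist p (h (t - D)) \<le> dist p (g s) + dist (g s) (h (t - D))" by (rule dist_triangle)
    have t3: "dist (g s) (h (t - D)) \<le> dist (g s) p + dist p (h (t - D))" by (rule dist_triangle)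
    show ?thesis using up vp es c t1 t2 t3 by (simp add: dist_commute)
  qed
  show ?thesis
    unfolding quasi_geodesic_def D_def[symmetric]
  proof (intro conjI ballI)
    show "0 \<le> D + l" using D0 l by simp
  next
    fix s t assume s: "s \<in> {0..D + l}" and t: "t \<in> {0..D + l}"
    let ?q = "\<lambda>s. if s \<le> D then g s else h (s - D)"
    have "\<bar>s - t\<bar> / 3 \<le> dist (?q s) (?q t) \<and> dist (?q s) (?q t) \<le> 3 * \<bar>s - t\<bar>"
    proof (cases "s \<le> D"; cases "t \<le> D")
      assume "s \<le> D" "t \<le> D"
      then have "dist (?q s) (?q t) = \<bar>s - t\<bar>" using geo_dist[OF g, of s t] s t unfolding D_def by auto
      then show ?thesis by auto
    next
      assume a: "\<not> s \<le> D" "\<not> t \<le> D"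
      then have "dist (?q s) (?q t) = \<bar>s - t\<bar>" using h s t by auto
      then show ?thesis by auto
    next
      assume a: "s \<le> D" "\<not> t \<le> D"
      then show ?thesis using mixed[of s t] s t by auto
    next
      assume a: "\<not> s \<le> D" "t \<le> D"
      then show ?thesis using mixed[of t s] s t by (auto simp: dist_commute)
    qed
    then show "\<bar>s - t\<bar> / 3 - 0 \<le> dist (?q s) (?q t)" "dist (?q s) (?q t) \<le> 3 * \<bar>s - t\<bar> + 0"
      by auto
  qed
qed

lemma morse_close:
  fixes g h \<alpha> :: "real \<Rightarrow> 'a::metric_space"
  assumes M: "N_Morse_geodesic N \<alpha> e x" and Ng: "morse_gauge N"
    and g: "geodesic_from g e p"
    and h: "\<forall>s\<in>{0..l}. \<forall>t\<in>{0..l}. dist (h s) (h t) = \<bar>s-t\<bar>"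
    and h0: "h 0 = p" and cl: "\<forall>t\<in>{0..l}. dist e p \<le> dist e (h t)" and l: "l \<ge> 0"
    and hl: "h l = x"
    and s: "0 \<le> s" "s \<le> dist e p" "s \<le> dist e x"
  shows "dist (g s) (\<alpha> s) \<le> 2 * N 3 0"
proof -
  define D where "D = dist e p"
  define q where "q = (\<lambda>s. if s \<le> D then g s else h (s - D))"
  have qg: "quasi_geodesic 3 0 q 0 (D + l)" using qg3[OF g h h0 cl l] unfolding q_def D_def .
  have ga: "geodesic_from \<alpha> e x" using M unfolding N_Morse_geodesic_def by blast
  have gD: "g D = p" "g 0 = e" using g unfolding geodesic_from_def D_def by auto
  have a0: "\<alpha> 0 = e" "\<alpha> (dist e x) = x" using ga unfolding geodesic_from_def by auto
  have q0: "q 0 \<in> \<alpha> ` {0..dist e x}"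
    using a0 gD unfolding q_def D_def by (auto intro!: image_eqI[of _ _ 0])
  have qe: "q (D + l) = x"
  proof (cases "l = 0")
    case True then show ?thesis using gD h0 hl unfolding q_def by auto
  next
    case False then show ?thesis using l hl unfolding q_def by auto
  qed
  have q1: "q (D + l) \<in> \<alpha> ` {0..dist e x}"
    using a0 qe by (auto intro!: image_eqI[of _ _ "dist e x"])
  have "\<forall>t\<in>{0..D+l}. \<exists>\<sigma>\<in>{0..dist e x}. dist (q t) (\<alpha> \<sigma>) \<le> N 3 0"
    using M qg q0 q1 unfolding N_Morse_geodesic_def by fastforce
  moreover have "s \<in> {0..D+l}" using s l unfolding D_def by auto
  ultimately obtain \<sigma> where \<sigma>: "\<sigma> \<in> {0..dist e x}" "dist (q s) (\<alpha> \<sigma>) \<le> N 3 0" by blast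
  have qs: "q s = g s" using s unfolding q_def D_def by auto
  have es: "dist e (g s) = s" using geo_dist[OF g, of 0 s] s gD by auto
  have ea: "dist e (\<alpha> \<sigma>) = \<sigma>" using geo_dist[OF ga, of 0 \<sigma>] \<sigma> a0 by auto
  have aa: "dist (\<alpha> \<sigma>) (\<alpha> s) = \<bar>\<sigma> - s\<bar>" using geo_dist[OF ga, of \<sigma> s] \<sigma> s by auto
  have t1: "dist e (g s) \<le> dist e (\<alpha> \<sigma>) + dist (\<alpha> \<sigma>) (g s)" by (rule dist_triangle)
  have t2: "dist e (\<alpha> \<sigma>) \<le> dist e (g s) + dist (g s) (\<alpha> \<sigma>)" by (rule dist_triangle)
  have t3: "dist (g s) (\<alpha> s) \<le> dist (g s) (\<alpha> \<sigma>) + dist (\<alpha> \<sigma>) (\<alpha> s)" by (rule dist_triangle)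
  show ?thesis using \<sigma>(2) qs es ea aa t1 t2 t3 by (cases "\<sigma> < s") (auto simp: dist_commute)
qed

lemma lemmaA:
  fixes \<alpha> \<beta> :: "real \<Rightarrow> 'a::metric_space"
  assumes G: "geodesic_space TYPE('a)" and Ng: "morse_gauge N"
    and Ma: "N_Morse_geodesic N \<alpha> e x" and Mb: "N_Morse_geodesic N \<beta> e y"
    and s: "0 \<le> s" "s \<le> gromov_product e x y"
  shows "dist (\<alpha> s) (\<beta> s) \<le> 4 * N 3 0"
proof -
  obtain \<gamma> where gam: "geodesic_from \<gamma> x y" using G unfolding geodesic_space_def by blast
  define L where "L = dist x y"
  have L0: "L \<ge> 0" unfolding L_def by simp
  have "continuous_on {0..L} (\<lambda>r. dist e (\<gamma> r))"
    using geo_cont[OF gam] unfolding L_def by (intro continuous_intros)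
  then obtain r where r: "r \<in> {0..L}" "\<forall>r'\<in>{0..L}. dist e (\<gamma> r) \<le> dist e (\<gamma> r')"
    using continuous_attains_inf[of "{0..L}" "\<lambda>r. dist e (\<gamma> r)"] L0 by auto
  define p where "p = \<gamma> r"
  obtain g where g: "geodesic_from g e p" using G unfolding geodesic_space_def by blast
  have gx: "\<gamma> 0 = x" "\<gamma> L = y" using gam unfolding geodesic_from_def L_def by auto
  have gd: "\<And>a b. a \<in> {0..L} \<Longrightarrow> b \<in> {0..L} \<Longrightarrow> dist (\<gamma> a) (\<gamma> b) = \<bar>a - b\<bar>"
    using geo_dist[OF gam] unfolding L_def by blast
  have px: "dist p x = r" using gd[of r 0] r gx unfolding p_def by auto
  have py: "dist p y = L - r" using gd[of r L] r gx unfolding p_def by auto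
  have "dist e x \<le> dist e p + dist p x" "dist e y \<le> dist e p + dist p y" by (rule dist_triangle)+
  then have Dge: "gromov_product e x y \<le> dist e p"
    using px py unfolding gromov_product_def L_def by simp
  have gxy: "gromov_product e x y \<le> dist e x" "gromov_product e x y \<le> dist e y"
    using dist_triangle[of e y x] dist_triangle[of e x y]
    unfolding gromov_product_def by (auto simp: dist_commute)
  have c1: "dist (g s) (\<alpha> s) \<le> 2 * N 3 0"
  proof (rule morse_close[OF Ma Ng g, where h="\<lambda>t. \<gamma> (r - t)" and l=r])
    show "\<forall>a\<in>{0..r}. \<forall>b\<in>{0..r}. dist (\<gamma> (r - a)) (\<gamma> (r - b)) = \<bar>a - b\<bar>"
      using gd r by auto
    show "\<gamma> (r - 0) = p" unfolding p_def by simp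
    show "\<forall>t\<in>{0..r}. dist e p \<le> dist e (\<gamma> (r - t))" using r unfolding p_def by auto
    show "0 \<le> r" using r by auto
    show "\<gamma> (r - r) = x" using gx by simp
  qed (use s Dge gxy in auto)
  have c2: "dist (g s) (\<beta> s) \<le> 2 * N 3 0"
  proof (rule morse_close[OF Mb Ng g, where h="\<lambda>t. \<gamma> (r + t)" and l="L - r"])
    show "\<forall>a\<in>{0..L - r}. \<forall>b\<in>{0..L - r}. dist (\<gamma> (r + a)) (\<gamma> (r + b)) = \<bar>a - b\<bar>"
      using gd r by auto
    show "\<gamma> (r + 0) = p" unfolding p_def by simp
    show "\<forall>t\<in>{0..L - r}. dist e p \<le> dist e (\<gamma> (r + t))" using r unfolding p_def by auto
    show "0 \<le> L - r" using r by auto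
    show "\<gamma> (r + (L - r)) = y" using gx by simp
  qed (use s Dge gxy in auto)
  show ?thesis using c1 c2 dist_triangle[of "\<alpha> s" "\<beta> s" "g s"] by (simp add: dist_commute)
qed

lemma gromov_nonneg: "gromov_product w x y \<ge> 0"
  unfolding gromov_product_def using dist_triangle[of x y w] by (simp add: dist_commute)

lemma lemmaB:
  fixes e :: "'a::metric_space"
  assumes G: "geodesic_space TYPE('a)" and Ng: "morse_gauge N"
    and x: "x \<in> morse_stratum N e" and y: "y \<in> morse_stratum N e" and z: "z \<in> morse_stratum N e"
  shows "gromov_product e x y \<ge> min (gromov_product e x z) (gromov_product e z y) - 4 * N 3 0"
proof -
  obtain \<alpha> where a: "N_Morse_geodesic N \<alpha> e x" using x unfolding morse_stratum_def by blast
  obtain \<beta> where b: "N_Morse_geodesic N \<beta> e y" using y unfolding morse_stratum_def by blast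
  obtain \<zeta> where c: "N_Morse_geodesic N \<zeta> e z" using z unfolding morse_stratum_def by blast
  define m where "m = min (gromov_product e x z) (gromov_product e z y)"
  have m0: "m \<ge> 0" unfolding m_def using gromov_nonneg[of e x z] gromov_nonneg[of e z y] by simp
  have d1: "dist (\<alpha> m) (\<zeta> m) \<le> 4 * N 3 0" by (rule lemmaA[OF G Ng a c m0]) (simp add: m_def)
  have d2: "dist (\<zeta> m) (\<beta> m) \<le> 4 * N 3 0" by (rule lemmaA[OF G Ng c b m0]) (simp add: m_def)
  have mx: "m \<le> dist e x" "m \<le> dist e y"
    using dist_triangle[of e z x] dist_triangle[of e z y]
    unfolding m_def gromov_product_def by (auto simp: dist_commute min_def)
  have ga: "geodesic_from \<alpha> e x" using a unfolding N_Morse_geodesic_def by blast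
  have gb: "geodesic_from \<beta> e y" using b unfolding N_Morse_geodesic_def by blast
  have "dist x (\<alpha> m) = dist e x - m"
    using geo_dist[OF ga, of "dist e x" m] ga m0 mx unfolding geodesic_from_def by auto
  moreover have "dist (\<beta> m) y = dist e y - m"
    using geo_dist[OF gb, of m "dist e y"] gb m0 mx unfolding geodesic_from_def by auto
  moreover have "dist x y \<le> dist x (\<alpha> m) + dist (\<alpha> m) (\<zeta> m) + dist (\<zeta> m) (\<beta> m) + dist (\<beta> m) y"
    using dist_triangle[of x y "\<alpha> m"] dist_triangle[of "\<alpha> m" y "\<zeta> m"] dist_triangle[of "\<zeta> m" y "\<beta> m"]
    by linarith
  ultimately have "gromov_product e x y \<ge> m - 4 * N 3 0" using d1 d2 unfolding gromov_product_def by (simp add: field_simps)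
  then show ?thesis unfolding m_def .
qed

theorem proposition3p2:
  fixes e :: "'a::metric_space" and N :: "real \<Rightarrow> real \<Rightarrow> real"
  assumes "geodesic_space TYPE('a)"
    and "morse_gauge N"
  shows "\<forall>w\<in>morse_stratum N e. \<forall>x\<in>morse_stratum N e. \<forall>y\<in>morse_stratum N e.
           \<forall>z\<in>morse_stratum N e.
           gromov_product w x y \<ge> min (gromov_product w x z) (gromov_product w z y) - 8 * N 3 0"
proof (intro ballI)
  fix w x y z assume w: "w \<in> morse_stratum N e" and x: "x \<in> morse_stratum N e"
    and y: "y \<in> morse_stratum N e" and z: "z \<in> morse_stratum N e"
  note B = lemmaB[OF assms]
  have d0: "N 3 0 \<ge> 0" using assms(2) unfolding morse_gauge_def by auto
  have ch: "gromov_product w a b = gromov_product e a b - gromov_product e a w - gromov_product e b w + dist e w"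
    for a b unfolding gromov_product_def by (simp add: dist_commute field_simps)
  have sym: "gromov_product e a b = gromov_product e b a" for a b
    unfolding gromov_product_def by (simp add: dist_commute)
  have "gromov_product e x y - gromov_product e x w - gromov_product e y w \<ge>
     min (gromov_product e x z - gromov_product e x w - gromov_product e z w)
         (gromov_product e y z - gromov_product e z w - gromov_product e y w) - 2 * (4 * N 3 0)"
    apply (rule basechange)
    using d0 B[OF x y z] B[OF x z y] B[OF y z x] B[OF x y w] B[OF x w y] B[OF y w x]
      B[OF x z w] B[OF x w z] B[OF z w x] B[OF y z w] B[OF y w z] B[OF z w y]
    by (simp_all add: sym)
  then show "gromov_product w x y \<ge> min (gromov_product w x z) (gromov_product w z y) - 8 * N 3 0"
    using ch[of x y] ch[of x z] ch[of z y] sym[of z y] sym[of e e] by (simp add: sym)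
qed

end
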